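(* Let $E$ be a graph with finitely many vertices and $K$ a field of characteristic $0$. Assume $E$ contains an edge $f$ which is the initial edge of an infinite path $q=fp$ (with $p$ an infinite path) such that $s(f)\ne r(f)=s(p)$. Then $\langle 1+2f^*,\ 1+2f\rangle$ is a non-cyclic free subgroup of $L_K(E)^\times$.
   Context: A graph $E=(E^0,E^1,r,s)$; $L_K(E)$ is the free associative $K$-algebra on $E^0\cup E^1\cup\{e^*\}$ subject to $vv'=\delta_{v,v'}v$, $s(e)e=er(e)=e$, $r(e)e^*=e^*s(e)=e^*$, $e^*f=\delta_{e,f}r(e)$, and $v=\sum_{s(e)=v}ee^*$ for every vertex $v$ emitting a finite nonzero number of edges; with $E^0$ finite it is unital with $1=\sum_v v$. An infinite path is $e_1e_2\cdots$ with $r(e_i)=s(e_{i+1})$, and its source is $s(e_1)$. *)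

theory Defs
  imports "HOL-Algebra.Algebra"
begin

text \<open>Generators of the free algebra underlying the Leavitt path algebra:
  vertices, real edges and ghost edges.\<close>
datatype ('v, 'e) lgen = Vx 'v | Ed 'e | Gh 'e

text \<open>Noncommutative polynomials: finitely supported functions from words to K.\<close>
definition fa_carrier :: "('g list \<Rightarrow> 'k::field) set" where
  "fa_carrier = {f. finite {w. f w \<noteq> 0}}"

definition fa_mult :: "('g list \<Rightarrow> 'k::field) \<Rightarrow> ('g list \<Rightarrow> 'k) \<Rightarrow> 'g list \<Rightarrow> 'k" where
  "fa_mult f g w = (\<Sum>(u, v) \<in> {(u, v). u @ v = w}. f u * g v)"

definition fa_mon :: "'g list \<Rightarrow> 'g list \<Rightarrow> 'k::field" where
  "fa_mon w = (\<lambda>x. if x = w then 1 else 0)"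

definition free_alg :: "('g list \<Rightarrow> 'k::field) ring" where
  "free_alg = \<lparr>carrier = fa_carrier, Group.monoid.mult = fa_mult, Group.monoid.one = fa_mon [],
               ring.zero = (\<lambda>_. 0), ring.add = (\<lambda>f g x. f x + g x)\<rparr>"

text \<open>The defining relations, as elements of the
  free algebra (each relation a = b is encoded as a - b).\<close>
definition leavitt_rels :: "('e \<Rightarrow> 'v) \<Rightarrow> ('e \<Rightarrow> 'v) \<Rightarrow> (('v, 'e) lgen list \<Rightarrow> 'k::field) set" where
  "leavitt_rels s r =
     {(\<lambda>x. fa_mon [Vx v, Vx v'] x - (if v = v' then fa_mon [Vx v] x else 0)) | v v'. True}
   \<union> {(\<lambda>x. fa_mon [Vx (s e), Ed e] x - fa_mon [Ed e] x) | e. True}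
   \<union> {(\<lambda>x. fa_mon [Ed e, Vx (r e)] x - fa_mon [Ed e] x) | e. True}
   \<union> {(\<lambda>x. fa_mon [Vx (r e), Gh e] x - fa_mon [Gh e] x) | e. True}
   \<union> {(\<lambda>x. fa_mon [Gh e, Vx (s e)] x - fa_mon [Gh e] x) | e. True}
   \<union> {(\<lambda>x. fa_mon [Gh e, Ed e'] x - (if e = e' then fa_mon [Vx (r e)] x else 0)) | e e'. True}
   \<union> {(\<lambda>x. fa_mon [Vx v] x - (\<Sum>e\<in>{e. s e = v}. fa_mon [Ed e, Gh e] x)) | v.
        finite {e. s e = v} \<and> {e. s e = v} \<noteq> {}}"

definition lpa_ideal :: "('e \<Rightarrow> 'v) \<Rightarrow> ('e \<Rightarrow> 'v) \<Rightarrow> (('v, 'e) lgen list \<Rightarrow> 'k::field) set" where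
  "lpa_ideal s r = genideal free_alg (leavitt_rels s r)"

definition LPA :: "('e \<Rightarrow> 'v) \<Rightarrow> ('e \<Rightarrow> 'v) \<Rightarrow> (('v, 'e) lgen list \<Rightarrow> 'k::field) set ring" where
  "LPA s r = free_alg Quot (lpa_ideal s r)"

definition lpa_class :: "('e \<Rightarrow> 'v) \<Rightarrow> ('e \<Rightarrow> 'v) \<Rightarrow> (('v, 'e) lgen list \<Rightarrow> 'k::field)
    \<Rightarrow> (('v, 'e) lgen list \<Rightarrow> 'k) set" where
  "lpa_class s r x = lpa_ideal s r +>\<^bsub>free_alg\<^esub> x"

definition inf_path :: "('e \<Rightarrow> 'v) \<Rightarrow> ('e \<Rightarrow> 'v) \<Rightarrow> (nat \<Rightarrow> 'e) \<Rightarrow> bool" where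
  "inf_path s r p \<longleftrightarrow> (\<forall>i. r (p i) = s (p (Suc i)))"

definition letter_val :: "('a, 'b) monoid_scheme \<Rightarrow> bool \<times> 'a \<Rightarrow> 'a" where
  "letter_val G l = (if fst l then snd l else inv\<^bsub>G\<^esub> (snd l))"

definition word_val :: "('a, 'b) monoid_scheme \<Rightarrow> (bool \<times> 'a) list \<Rightarrow> 'a" where
  "word_val G w = foldr (\<lambda>l acc. letter_val G l \<otimes>\<^bsub>G\<^esub> acc) w \<one>\<^bsub>G\<^esub>"

definition reduced_word :: "(bool \<times> 'a) list \<Rightarrow> bool" where
  "reduced_word w \<longleftrightarrow>
     (\<forall>i. Suc i < length w \<longrightarrow> \<not> (snd (w ! i) = snd (w ! Suc i) \<and> fst (w ! i) \<noteq> fst (w ! Suc i)))"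

definition free_basis :: "('a, 'b) monoid_scheme \<Rightarrow> 'a set \<Rightarrow> bool" where
  "free_basis G B \<longleftrightarrow> B \<subseteq> carrier G \<and> generate G B = carrier G \<and>
     (\<forall>w. w \<noteq> [] \<and> set (map snd w) \<subseteq> B \<and> reduced_word w \<longrightarrow> word_val G w \<noteq> one G)"

definition free_group :: "('a, 'b) monoid_scheme \<Rightarrow> bool" where
  "free_group G \<longleftrightarrow> group G \<and> (\<exists>B. free_basis G B)"

definition cyclic_group :: "('a, 'b) monoid_scheme \<Rightarrow> bool" where
  "cyclic_group G \<longleftrightarrow> group G \<and> (\<exists>g \<in> carrier G. generate G {g} = carrier G)"

end

theory Submission
  imports Defs
begin

lemma splits_eq: "{(u, v). u @ v = w} = (\<lambda>i. (take i w, drop i w)) ` {..length w}"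
proof (rule subset_antisym)
  show "{(u, v). u @ v = w} \<subseteq> (\<lambda>i. (take i w, drop i w)) ` {..length w}"
  proof
    fix x assume "x \<in> {(u, v). u @ v = w}"
    then obtain u v where x: "x = (u,v)" "u @ v = w" by blast
    then show "x \<in> (\<lambda>i. (take i w, drop i w)) ` {..length w}"
      by (intro image_eqI[where x="length u"]) auto
  qed
qed auto

lemma finite_splits[simp]: "finite {(u, v). u @ v = w}"
  by (simp add: splits_eq)

lemma finite_triples[simp]: "finite {(a, b, c). a @ b @ c = w}"
proof -
  have "{(a, b, c). a @ b @ c = w} \<subseteq> (\<lambda>((a,x),(b,c)). (a,b,c)) ` (Sigma {(u, v). u @ v = w} (\<lambda>(a,x). {(b,c). b @ c = x}))"
    by (auto simp: image_iff)
  moreover have "finite (Sigma {(u, v). u @ v = w} (\<lambda>(a,x). {(b,c). b @ c = x}))"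
    by (intro finite_SigmaI) auto
  ultimately show ?thesis by (meson finite_imageI finite_subset)
qed

lemma fa_mult_left3:
  "fa_mult (fa_mult f g) h w = (\<Sum>(a,b,c)\<in>{(a, b, c). a @ b @ c = w}. f a * g b * h c)"
proof -
  have "fa_mult (fa_mult f g) h w = (\<Sum>(u,v)\<in>{(u, v). u @ v = w}. \<Sum>(a,b)\<in>{(a, b). a @ b = u}. f a * g b * h v)"
    unfolding fa_mult_def by (simp add: sum_distrib_right case_prod_unfold)
  also have "\<dots> = (\<Sum>x\<in>{(u, v). u @ v = w}. \<Sum>y\<in>{(a, b). a @ b = fst x}. f (fst y) * g (snd y) * h (snd x))"
    by (simp add: case_prod_unfold)
  also have "\<dots> = (\<Sum>(x,y)\<in>Sigma {(u, v). u @ v = w} (\<lambda>x. {(a, b). a @ b = fst x}). f (fst y) * g (snd y) * h (snd x))"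
    by (rule sum.Sigma) auto
  also have "\<dots> = (\<Sum>((u,v),(a,b))\<in>Sigma {(u, v). u @ v = w} (\<lambda>x. {(a, b). a @ b = fst x}). f a * g b * h v)"
    by (simp add: case_prod_unfold)
  also have "\<dots> = (\<Sum>(a,b,c)\<in>{(a, b, c). a @ b @ c = w}. f a * g b * h c)"
    by (rule sum.reindex_bij_witness[where i="\<lambda>(a,b,c). ((a@b,c),(a,b))" and j="\<lambda>((u,v),(a,b)). (a,b,v)"]) auto
  finally show ?thesis .
qed

lemma fa_mult_right3:
  "fa_mult f (fa_mult g h) w = (\<Sum>(a,b,c)\<in>{(a, b, c). a @ b @ c = w}. f a * g b * h c)"
proof -
  have "fa_mult f (fa_mult g h) w = (\<Sum>(u,v)\<in>{(u, v). u @ v = w}. \<Sum>(b,c)\<in>{(a, b). a @ b = v}. f u * g b * h c)"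
    unfolding fa_mult_def by (simp add: sum_distrib_left case_prod_unfold mult.assoc)
  also have "\<dots> = (\<Sum>x\<in>{(u, v). u @ v = w}. \<Sum>y\<in>{(a, b). a @ b = snd x}. f (fst x) * g (fst y) * h (snd y))"
    by (simp add: case_prod_unfold)
  also have "\<dots> = (\<Sum>(x,y)\<in>Sigma {(u, v). u @ v = w} (\<lambda>x. {(a, b). a @ b = snd x}). f (fst x) * g (fst y) * h (snd y))"
    by (rule sum.Sigma) auto
  also have "\<dots> = (\<Sum>((u,v),(b,c))\<in>Sigma {(u, v). u @ v = w} (\<lambda>x. {(a, b). a @ b = snd x}). f u * g b * h c)"
    by (simp add: case_prod_unfold)
  also have "\<dots> = (\<Sum>(a,b,c)\<in>{(a, b, c). a @ b @ c = w}. f a * g b * h c)"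
    by (rule sum.reindex_bij_witness[where i="\<lambda>(a,b,c). ((a,b@c),(b,c))" and j="\<lambda>((u,v),(b,c)). (u,b,c)"]) auto
  finally show ?thesis .
qed

lemma fa_mult_assoc: "fa_mult (fa_mult f g) h = fa_mult f (fa_mult g h)"
  by (rule ext) (simp add: fa_mult_left3 fa_mult_right3)

lemma fa_mult_one_left: "fa_mult (fa_mon []) g = (g :: 'g list \<Rightarrow> 'k::field)"
proof (rule ext)
  fix w :: "'g list"
  have "fa_mult (fa_mon []) g w = (\<Sum>x\<in>{([]::'g list, w)}. (case x of (u, v) \<Rightarrow> fa_mon [] u * g v))"
    unfolding fa_mult_def
    apply (rule sum.mono_neutral_right)
    apply simp
    apply simp
    by (auto simp: fa_mon_def split: if_splits)
  then show "fa_mult (fa_mon []) g w = g w" by (simp add: fa_mon_def)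
qed

lemma fa_mult_one_right: "fa_mult g (fa_mon []) = (g :: 'g list \<Rightarrow> 'k::field)"
proof (rule ext)
  fix w :: "'g list"
  have "fa_mult g (fa_mon []) w = (\<Sum>x\<in>{(w, []::'g list)}. (case x of (u, v) \<Rightarrow> g u * fa_mon [] v))"
    unfolding fa_mult_def
    apply (rule sum.mono_neutral_right)
    apply simp
    apply simp
    by (auto simp: fa_mon_def split: if_splits)
  then show "fa_mult g (fa_mon []) w = g w" by (simp add: fa_mon_def)
qed

lemma fa_mult_distl: "fa_mult f (\<lambda>x. g x + h x) = (\<lambda>x. fa_mult f g x + fa_mult f h x)"
  unfolding fa_mult_def by (auto simp: case_prod_unfold distrib_left sum.distrib)

lemma fa_mult_distr: "fa_mult (\<lambda>x. f x + g x) h = (\<lambda>x. fa_mult f h x + fa_mult g h x)"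
  unfolding fa_mult_def by (auto simp: case_prod_unfold distrib_right sum.distrib)

lemma fa_mult_carrier:
  assumes "finite {w. f w \<noteq> 0}" "finite {w. g w \<noteq> 0}"
  shows "finite {w. fa_mult f g w \<noteq> (0::'k::field)}"
proof -
  have "{w. fa_mult f g w \<noteq> 0} \<subseteq> (\<lambda>(u,v). u @ v) ` ({w. f w \<noteq> 0} \<times> {w. g w \<noteq> 0})"
  proof
    fix w assume "w \<in> {w. fa_mult f g w \<noteq> 0}"
    then obtain u v where "u @ v = w" "f u * g v \<noteq> 0"
      unfolding fa_mult_def by (auto elim!: sum.not_neutral_contains_not_neutral)
    then show "w \<in> (\<lambda>(u,v). u @ v) ` ({w. f w \<noteq> 0} \<times> {w. g w \<noteq> 0})" by force
  qed
  then show ?thesis using assms by (meson finite_SigmaI finite_imageI finite_subset)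
qed

lemma free_alg_ring: "ring (free_alg :: ('g list \<Rightarrow> 'k::field) ring)"
proof (rule ringI)
  show "abelian_group (free_alg :: ('g list \<Rightarrow> 'k::field) ring)"
  proof (rule abelian_groupI)
    fix x y :: "'g list \<Rightarrow> 'k"
    assume "x \<in> carrier free_alg" "y \<in> carrier free_alg"
    then show "x \<oplus>\<^bsub>free_alg\<^esub> y \<in> carrier free_alg"
      unfolding free_alg_def fa_carrier_def
      by (auto intro: finite_subset[of _ "{w. x w \<noteq> 0} \<union> {w. y w \<noteq> 0}"])
  next
    show "\<zero>\<^bsub>free_alg\<^esub> \<in> carrier (free_alg :: ('g list \<Rightarrow> 'k::field) ring)"
      unfolding free_alg_def fa_carrier_def by simp
  next
    fix x :: "'g list \<Rightarrow> 'k"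
    assume "x \<in> carrier free_alg"
    then show "\<exists>y\<in>carrier free_alg. y \<oplus>\<^bsub>free_alg\<^esub> x = \<zero>\<^bsub>free_alg\<^esub>"
      unfolding free_alg_def fa_carrier_def
      by (intro bexI[where x="\<lambda>w. - x w"]) auto
  qed (auto simp: free_alg_def add.assoc add.commute)
next
  show "monoid (free_alg :: ('g list \<Rightarrow> 'k::field) ring)"
  proof (rule monoidI)
    fix x y :: "'g list \<Rightarrow> 'k"
    assume "x \<in> carrier free_alg" "y \<in> carrier free_alg"
    then show "x \<otimes>\<^bsub>free_alg\<^esub> y \<in> carrier free_alg"
      unfolding free_alg_def fa_carrier_def by (auto intro: fa_mult_carrier)
  next
    show "\<one>\<^bsub>free_alg\<^esub> \<in> carrier (free_alg :: ('g list \<Rightarrow> 'k::field) ring)"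
      unfolding free_alg_def fa_carrier_def fa_mon_def by simp
  qed (auto simp: free_alg_def fa_mult_assoc fa_mult_one_left fa_mult_one_right)
qed (auto simp: free_alg_def fa_mult_distl fa_mult_distr)


definition pcons :: "'e \<Rightarrow> (nat \<Rightarrow> 'e) \<Rightarrow> nat \<Rightarrow> 'e" where
  "pcons e q = (\<lambda>i. case i of 0 \<Rightarrow> e | Suc j \<Rightarrow> q j)"

context
  fixes s r :: "'e \<Rightarrow> 'v"
begin

definition act1 :: "('v, 'e) lgen \<Rightarrow> (nat \<Rightarrow> 'e) \<Rightarrow> (nat \<Rightarrow> 'e) option" where
  "act1 g q = (if inf_path s r q then
     (case g of Vx v \<Rightarrow> if s (q 0) = v then Some q else None
      | Ed e \<Rightarrow> if r e = s (q 0) then Some (pcons e q) else None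
      | Gh e \<Rightarrow> if q 0 = e then Some (\<lambda>i. q (Suc i)) else None) else None)"

fun act :: "('v, 'e) lgen list \<Rightarrow> (nat \<Rightarrow> 'e) \<Rightarrow> (nat \<Rightarrow> 'e) option" where
  "act [] q = Some q"
| "act (g # w) q = Option.bind (act w q) (act1 g)"

lemma act_append: "act (u @ v) q = Option.bind (act v q) (act u)"
  by (induction u) (auto simp: bind_assoc)

definition ind :: "('v, 'e) lgen list \<Rightarrow> (nat \<Rightarrow> 'e) \<Rightarrow> (nat \<Rightarrow> 'e) \<Rightarrow> 'k::field" where
  "ind w q q' = (if act w q = Some q' then 1 else 0)"

definition rho :: "(('v, 'e) lgen list \<Rightarrow> 'k::field) \<Rightarrow> (nat \<Rightarrow> 'e) \<Rightarrow> (nat \<Rightarrow> 'e) \<Rightarrow> 'k" where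
  "rho F q q' = (\<Sum>w | F w \<noteq> 0. F w * ind w q q')"

lemma rho_sub:
  assumes "finite W" "{w. F w \<noteq> 0} \<subseteq> W"
  shows "rho F q q' = (\<Sum>w\<in>W. F w * ind w q q')"
  unfolding rho_def
  by (rule sum.mono_neutral_left) (use assms in auto)

lemma rho_mult_pairs:
  fixes F G :: "('v, 'e) lgen list \<Rightarrow> 'k::field"
  assumes fF: "finite {w. F w \<noteq> 0}" and fG: "finite {w. G w \<noteq> 0}"
  shows "rho (fa_mult F G) q q'' =
    (\<Sum>(u,v)\<in>{w. F w \<noteq> 0} \<times> {w. G w \<noteq> 0}. F u * G v * ind (u @ v) q q'')"
proof -
  let ?SF = "{w. F w \<noteq> 0}" and ?SG = "{w. G w \<noteq> 0}"
  let ?W = "(\<lambda>(u,v). u @ v) ` (?SF \<times> ?SG)"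
  have fW: "finite ?W" using fF fG by auto
  have sub: "{w. fa_mult F G w \<noteq> 0} \<subseteq> ?W"
  proof
    fix w assume "w \<in> {w. fa_mult F G w \<noteq> 0}"
    then obtain u v where "u @ v = w" "F u * G v \<noteq> 0"
      unfolding fa_mult_def by (auto elim!: sum.not_neutral_contains_not_neutral)
    then show "w \<in> ?W" by force
  qed
  have "rho (fa_mult F G) q q'' = (\<Sum>w\<in>?W. fa_mult F G w * ind w q q'')"
    by (rule rho_sub[OF fW sub])
  also have "\<dots> = (\<Sum>w\<in>?W. \<Sum>x\<in>{x \<in> ?SF \<times> ?SG. (\<lambda>(u,v). u @ v) x = w}. (\<lambda>(u,v). F u * G v * ind (u @ v) q q'') x)"
  proof (rule sum.cong[OF refl])
    fix w assume "w \<in> ?W"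
    have "fa_mult F G w * ind w q q'' = (\<Sum>(u,v)\<in>{(u, v). u @ v = w}. F u * G v * ind (u @ v) q q'')"
      unfolding fa_mult_def sum_distrib_right by (rule sum.cong) auto
    also have "\<dots> = (\<Sum>x\<in>{x \<in> ?SF \<times> ?SG. (\<lambda>(u,v). u @ v) x = w}. (\<lambda>(u,v). F u * G v * ind (u @ v) q q'') x)"
      apply (rule sum.mono_neutral_right)
        apply simp
       apply auto
      done
    finally show "fa_mult F G w * ind w q q'' = (\<Sum>x\<in>{x \<in> ?SF \<times> ?SG. (\<lambda>(u,v). u @ v) x = w}. (\<lambda>(u,v). F u * G v * ind (u @ v) q q'') x)" .
  qed
  also have "\<dots> = (\<Sum>(u,v)\<in>?SF \<times> ?SG. F u * G v * ind (u @ v) q q'')"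
    by (rule sum.group) (use fF fG in auto)
  finally show ?thesis .
qed

lemma ind_comp:
  assumes "finite Q" "\<And>q'. act v q = Some q' \<Longrightarrow> q' \<in> Q"
  shows "(\<Sum>q'\<in>Q. ind v q q' * ind u q' q'') = (ind (u @ v) q q'' :: 'k::field)"
proof (cases "act v q")
  case None
  then show ?thesis by (simp add: ind_def act_append)
next
  case (Some q1)
  then have q1: "q1 \<in> Q" using assms by auto
  have "(\<Sum>q'\<in>Q. ind v q q' * ind u q' q'') = (\<Sum>q'\<in>Q. if q' = q1 then (ind u q1 q'' :: 'k) else 0)"
    by (rule sum.cong) (auto simp: ind_def Some)
  also have "\<dots> = ind u q1 q''" using q1 assms(1) by simp
  finally show ?thesis by (simp add: ind_def act_append Some)
qed

lemma rho_mult: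
  fixes F G :: "('v, 'e) lgen list \<Rightarrow> 'k::field"
  assumes fF: "finite {w. F w \<noteq> 0}" and fG: "finite {w. G w \<noteq> 0}"
    and fQ: "finite Q" and Q: "\<And>v q'. G v \<noteq> 0 \<Longrightarrow> act v q = Some q' \<Longrightarrow> q' \<in> Q"
  shows "rho (fa_mult F G) q q'' = (\<Sum>q'\<in>Q. rho G q q' * rho F q' q'')"
proof -
  let ?SF = "{w. F w \<noteq> 0}" and ?SG = "{w. G w \<noteq> 0}"
  have "(\<Sum>q'\<in>Q. rho G q q' * rho F q' q'') =
     (\<Sum>q'\<in>Q. \<Sum>v\<in>?SG. \<Sum>u\<in>?SF. F u * G v * (ind v q q' * ind u q' q''))"
    unfolding rho_def sum_distrib_right sum_distrib_left
    apply (rule sum.cong[OF refl])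
    apply (subst sum.swap)
    apply (rule sum.cong[OF refl])+
    by (simp add: algebra_simps)
  also have "\<dots> = (\<Sum>v\<in>?SG. \<Sum>q'\<in>Q. \<Sum>u\<in>?SF. F u * G v * (ind v q q' * ind u q' q''))"
    by (rule sum.swap)
  also have "\<dots> = (\<Sum>v\<in>?SG. \<Sum>u\<in>?SF. \<Sum>q'\<in>Q. F u * G v * (ind v q q' * ind u q' q''))"
    by (rule sum.cong[OF refl], rule sum.swap)
  also have "\<dots> = (\<Sum>v\<in>?SG. \<Sum>u\<in>?SF. F u * G v * ind (u @ v) q q'')"
    unfolding sum_distrib_left[symmetric]
    by (intro sum.cong refl arg_cong[where f="\<lambda>x. _ * x"] ind_comp fQ) (auto intro: Q)
  also have "\<dots> = (\<Sum>(u,v)\<in>?SF \<times> ?SG. F u * G v * ind (u @ v) q q'')"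
    by (subst sum.swap) (rule sum.cartesian_product)
  finally show ?thesis using rho_mult_pairs[OF fF fG] by simp
qed

end

lemma fa_simps:
  "carrier free_alg = fa_carrier"
  "x \<otimes>\<^bsub>free_alg\<^esub> y = fa_mult x y"
  "x \<oplus>\<^bsub>free_alg\<^esub> y = (\<lambda>w. x w + y w)"
  "\<zero>\<^bsub>free_alg\<^esub> = (\<lambda>w. 0)"
  "\<one>\<^bsub>free_alg\<^esub> = fa_mon []"
  by (simp_all add: free_alg_def)

lemma supp_mon: "{x. (fa_mon w x :: 'k::field) \<noteq> 0} = {w}"
  by (auto simp: fa_mon_def)

context
  fixes s r :: "'e \<Rightarrow> 'v"
begin

lemma rho_add:
  fixes F G :: "('v, 'e) lgen list \<Rightarrow> 'k::field"
  assumes "finite {w. F w \<noteq> 0}" "finite {w. G w \<noteq> 0}"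
  shows "rho s r (\<lambda>x. F x + G x) q q' = rho s r F q q' + rho s r G q q'"
proof -
  let ?W = "{w. F w \<noteq> 0} \<union> {w. G w \<noteq> 0}"
  have "rho s r (\<lambda>x. F x + G x) q q' = (\<Sum>w\<in>?W. (F w + G w) * ind s r w q q')"
    by (rule rho_sub) (use assms in auto)
  also have "\<dots> = (\<Sum>w\<in>?W. F w * ind s r w q q') + (\<Sum>w\<in>?W. G w * ind s r w q q')"
    by (simp add: distrib_right sum.distrib)
  also have "\<dots> = rho s r F q q' + rho s r G q q'"
    by (subst (1 2) rho_sub[where W="?W"]) (use assms in auto)
  finally show ?thesis .
qed

lemma rho_smult:
  fixes F :: "('v, 'e) lgen list \<Rightarrow> 'k::field"
  assumes "finite {w. F w \<noteq> 0}"
  shows "rho s r (\<lambda>x. c * F x) q q' = c * rho s r F q q'"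
proof -
  have "rho s r (\<lambda>x. c * F x) q q' = (\<Sum>w\<in>{w. F w \<noteq> 0}. (c * F w) * ind s r w q q')"
    by (rule rho_sub) (use assms in auto)
  also have "\<dots> = c * rho s r F q q'"
    by (simp add: rho_def sum_distrib_left mult.assoc)
  finally show ?thesis .
qed

lemma rho_diff:
  fixes F G :: "('v, 'e) lgen list \<Rightarrow> 'k::field"
  assumes "finite {w. F w \<noteq> 0}" "finite {w. G w \<noteq> 0}"
  shows "rho s r (\<lambda>x. F x - G x) q q' = rho s r F q q' - rho s r G q q'"
proof -
  have "finite {w. (- 1) * G w \<noteq> 0}" using assms(2) by simp
  then have "rho s r (\<lambda>x. F x + (- 1) * G x) q q' = rho s r F q q' + rho s r (\<lambda>x. (- 1) * G x) q q'"
    using rho_add[OF assms(1), of "\<lambda>x. (- 1) * G x"] by simp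
  then show ?thesis using rho_smult[OF assms(2), of "-1"] by simp
qed

lemma rho_zero: "rho s r (\<lambda>x. 0) q q' = 0"
  by (simp add: rho_def)

lemma rho_mon: "rho s r (fa_mon w) q q' = (ind s r w q q' :: 'k::field)"
  by (simp add: rho_def supp_mon) (simp add: fa_mon_def)

lemma finite_supp_sum:
  fixes F :: "'i \<Rightarrow> ('v, 'e) lgen list \<Rightarrow> 'k::field"
  assumes "finite I" "\<And>i. i \<in> I \<Longrightarrow> finite {w. F i w \<noteq> 0}"
  shows "finite {w. (\<Sum>i\<in>I. F i w) \<noteq> 0}"
proof -
  have "{w. (\<Sum>i\<in>I. F i w) \<noteq> 0} \<subseteq> (\<Union>i\<in>I. {w. F i w \<noteq> 0})"
    by (auto elim!: sum.not_neutral_contains_not_neutral)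
  then show ?thesis using assms by (meson finite_UN_I finite_subset)
qed

lemma rho_sum:
  fixes F :: "'i \<Rightarrow> ('v, 'e) lgen list \<Rightarrow> 'k::field"
  assumes "finite I" "\<And>i. i \<in> I \<Longrightarrow> finite {w. F i w \<noteq> 0}"
  shows "rho s r (\<lambda>x. \<Sum>i\<in>I. F i x) q q' = (\<Sum>i\<in>I. rho s r (F i) q q')"
  using assms
proof (induction I rule: finite_induct)
  case empty
  then show ?case by (simp add: rho_zero)
next
  case (insert i I)
  have "rho s r (\<lambda>x. \<Sum>i\<in>insert i I. F i x) q q' = rho s r (\<lambda>x. F i x + (\<Sum>i\<in>I. F i x)) q q'"
    using insert by simp
  also have "\<dots> = rho s r (F i) q q' + rho s r (\<lambda>x. \<Sum>i\<in>I. F i x) q q'"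
    using rho_add[of "F i" "\<lambda>x. \<Sum>i\<in>I. F i x"] insert finite_supp_sum[of I F] by simp
  finally show ?case using insert by simp
qed

definition kerK :: "(('v, 'e) lgen list \<Rightarrow> 'k::field) set" where
  "kerK = {F \<in> fa_carrier. \<forall>q q'. rho s r F q q' = 0}"

lemma kerK_ideal: "ideal kerK (free_alg :: (('v, 'e) lgen list \<Rightarrow> 'k::field) ring)"
proof -
  interpret R: ring "free_alg :: (('v, 'e) lgen list \<Rightarrow> 'k::field) ring" by (rule free_alg_ring)
  have inv_eq: "\<ominus>\<^bsub>free_alg\<^esub> F = (\<lambda>x. - F x)" if "F \<in> carrier (free_alg :: (('v, 'e) lgen list \<Rightarrow> 'k::field) ring)" for F
  proof (rule R.add.inv_equality)
    show "(\<lambda>x. - F x) \<oplus>\<^bsub>free_alg\<^esub> F = \<zero>\<^bsub>free_alg\<^esub>" by (simp add: fa_simps)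
    show "(\<lambda>x. - F x) \<in> carrier free_alg" using that by (simp add: fa_simps fa_carrier_def)
  qed (rule that)
  have kerD: "F \<in> fa_carrier" "rho s r F q q' = 0" if "F \<in> kerK" for F q q'
    using that by (auto simp: kerK_def)
  show ?thesis
  proof (rule idealI[OF free_alg_ring])
    show "subgroup kerK (add_monoid (free_alg :: (('v, 'e) lgen list \<Rightarrow> 'k::field) ring))"
    proof (rule R.add.subgroupI)
      show "kerK \<subseteq> carrier (free_alg :: (('v, 'e) lgen list \<Rightarrow> 'k::field) ring)"
        unfolding kerK_def fa_simps by blast
      have "(\<lambda>x. 0) \<in> (kerK :: (('v, 'e) lgen list \<Rightarrow> 'k::field) set)"
        unfolding kerK_def fa_carrier_def by (simp add: rho_zero)
      then show "(kerK :: (('v, 'e) lgen list \<Rightarrow> 'k::field) set) \<noteq> {}" by blast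
    next
      fix F assume F: "F \<in> (kerK :: (('v, 'e) lgen list \<Rightarrow> 'k::field) set)"
      then have Fc: "F \<in> carrier free_alg" by (simp add: kerD fa_simps)
      have fF: "finite {w. F w \<noteq> 0}" using kerD(1)[OF F] by (simp add: fa_carrier_def)
      have "(\<lambda>x. - F x) \<in> kerK"
        unfolding kerK_def fa_carrier_def
      proof (intro CollectI conjI allI)
        show "finite {x. - F x \<noteq> 0}" using fF by simp
        fix q q' show "rho s r (\<lambda>x. - F x) q q' = 0"
          using rho_smult[OF fF, of "-1" q q'] kerD(2)[OF F, of q q'] by simp
      qed
      then show "\<ominus>\<^bsub>free_alg\<^esub> F \<in> kerK"
        using inv_eq[OF Fc] by simp
    next
      fix F G assume F: "F \<in> (kerK :: (('v, 'e) lgen list \<Rightarrow> 'k::field) set)" and G: "G \<in> (kerK :: (('v, 'e) lgen list \<Rightarrow> 'k::field) set)"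
      have fF: "finite {w. F w \<noteq> 0}" using kerD(1)[OF F] by (simp add: fa_carrier_def)
      have fG: "finite {w. G w \<noteq> 0}" using kerD(1)[OF G] by (simp add: fa_carrier_def)
      have "(\<lambda>x. F x + G x) \<in> kerK"
        unfolding kerK_def fa_carrier_def
      proof (intro CollectI conjI allI)
        show "finite {x. F x + G x \<noteq> 0}"
          by (rule finite_subset[of _ "{w. F w \<noteq> 0} \<union> {w. G w \<noteq> 0}"]) (use fF fG in auto)
        fix q q' show "rho s r (\<lambda>x. F x + G x) q q' = 0"
          using rho_add[OF fF fG, of q q'] kerD(2)[OF F, of q q'] kerD(2)[OF G, of q q'] by simp
      qed
      then show "F \<oplus>\<^bsub>free_alg\<^esub> G \<in> kerK" by (simp add: fa_simps)
    qed
  next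
    fix F G assume F: "F \<in> (kerK :: (('v, 'e) lgen list \<Rightarrow> 'k::field) set)" and G: "G \<in> carrier (free_alg :: (('v, 'e) lgen list \<Rightarrow> 'k::field) ring)"
    have Fc: "F \<in> carrier free_alg" using F by (simp add: kerD fa_simps)
    have fF: "finite {w. F w \<noteq> 0}" using kerD(1)[OF F] by (simp add: fa_carrier_def)
    have fG: "finite {w. G w \<noteq> 0}" using G by (simp add: fa_simps fa_carrier_def)
    have FG1: "fa_mult G F \<in> fa_carrier" using R.m_closed[OF G Fc] by (simp add: fa_simps)
    let ?QF = "\<lambda>q. (\<lambda>v. the (act s r v q)) ` {v. F v \<noteq> 0}"
    have "rho s r (fa_mult G F) q q'' = 0" for q q''
    proof -
      have "rho s r (fa_mult G F) q q'' = (\<Sum>q'\<in>?QF q. rho s r F q q' * rho s r G q' q'')"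
        apply (rule rho_mult[OF fG fF])
        using fF apply simp
        by (metis (mono_tags, lifting) image_eqI mem_Collect_eq option.sel)
      also have "\<dots> = 0" using kerD(2)[OF F] by simp
      finally show ?thesis .
    qed
    then show "G \<otimes>\<^bsub>free_alg\<^esub> F \<in> kerK"
      using FG1 by (simp add: kerK_def fa_simps)
  next
    fix F G assume F: "F \<in> (kerK :: (('v, 'e) lgen list \<Rightarrow> 'k::field) set)" and G: "G \<in> carrier (free_alg :: (('v, 'e) lgen list \<Rightarrow> 'k::field) ring)"
    have Fc: "F \<in> carrier free_alg" using F by (simp add: kerD fa_simps)
    have fF: "finite {w. F w \<noteq> 0}" using kerD(1)[OF F] by (simp add: fa_carrier_def)
    have fG: "finite {w. G w \<noteq> 0}" using G by (simp add: fa_simps fa_carrier_def)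
    have FG2: "fa_mult F G \<in> fa_carrier" using R.m_closed[OF Fc G] by (simp add: fa_simps)
    let ?QG = "\<lambda>q. (\<lambda>v. the (act s r v q)) ` {v. G v \<noteq> 0}"
    have "rho s r (fa_mult F G) q q'' = 0" for q q''
    proof -
      have "rho s r (fa_mult F G) q q'' = (\<Sum>q'\<in>?QG q. rho s r G q q' * rho s r F q' q'')"
        apply (rule rho_mult[OF fF fG])
        using fG apply simp
        by (metis (mono_tags, lifting) image_eqI mem_Collect_eq option.sel)
      also have "\<dots> = 0" using kerD(2)[OF F] by simp
      finally show ?thesis .
    qed
    then show "F \<otimes>\<^bsub>free_alg\<^esub> G \<in> kerK"
      using FG2 by (simp add: kerK_def fa_simps)
  qed
qed

end

lemma pcons_simps[simp]: "pcons e q 0 = e" "pcons e q (Suc i) = q i" "(\<lambda>i. pcons e q (Suc i)) = q"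
  by (auto simp: pcons_def)

lemma pcons_tail: "pcons (q 0) (\<lambda>i. q (Suc i)) = q"
  by (rule ext) (auto simp: pcons_def split: nat.splits)

lemma inf_path_pcons: "inf_path s r (pcons e q) \<longleftrightarrow> r e = s (q 0) \<and> inf_path s r q"
proof
  assume h: "inf_path s r (pcons e q)"
  have "r e = s (q 0)" using h[unfolded inf_path_def, rule_format, of 0] by simp
  moreover have "inf_path s r q" unfolding inf_path_def
  proof
    fix i show "r (q i) = s (q (Suc i))" using h[unfolded inf_path_def, rule_format, of "Suc i"] by simp
  qed
  ultimately show "r e = s (q 0) \<and> inf_path s r q" by simp
next
  assume "r e = s (q 0) \<and> inf_path s r q"
  then show "inf_path s r (pcons e q)" unfolding inf_path_def
    by (auto simp: pcons_def split: nat.splits)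
qed

lemma inf_path_tail: "inf_path s r q \<Longrightarrow> inf_path s r (\<lambda>i. q (Suc i))"
  by (simp add: inf_path_def)

lemma inf_path_0: "inf_path s r q \<Longrightarrow> r (q 0) = s (q (Suc 0))"
  by (simp add: inf_path_def)

context
  fixes s r :: "'e \<Rightarrow> 'v"
begin

lemma act_single[simp]: "act s r [g] q = act1 s r g q"
  by simp

lemma act_two: "act s r [g1, g2] q = Option.bind (act1 s r g2 q) (act1 s r g1)"
  by simp

lemma ind_two: "ind s r [g1, g2] q q' = (if Option.bind (act1 s r g2 q) (act1 s r g1) = Some q' then 1 else 0)"
  by (simp add: ind_def)

lemma ind_one: "ind s r [g] q q' = (if act1 s r g q = Some q' then 1 else 0)"
  by (simp add: ind_def)

lemma rho_mon_diff:
  "rho s r (\<lambda>x. fa_mon A x - fa_mon B x) q q' = (ind s r A q q' - ind s r B q q' :: 'k::field)"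
  by (subst rho_diff) (auto simp: supp_mon rho_mon)

lemma rho_mon_diff0:
  "rho s r (\<lambda>x. fa_mon A x - 0) q q' = (ind s r A q q' :: 'k::field)"
  by (simp add: rho_mon)

lemma finite_supp_mon[simp]: "finite {x. (fa_mon w x :: 'k::field) \<noteq> 0}"
  by (simp add: supp_mon)

lemma fin_mon2[simp]: "finite {w. (fa_mon A w :: 'k::field) \<noteq> fa_mon B w}"
  by (rule finite_subset[of _ "{A, B}"]) (auto simp: fa_mon_def)

lemma rels_sub_ker: "leavitt_rels s r \<subseteq> (kerK s r :: (('v, 'e) lgen list \<Rightarrow> 'k::field) set)"
proof
  fix Xr :: "('v, 'e) lgen list \<Rightarrow> 'k"
  assume "Xr \<in> leavitt_rels s r"
  then consider
      (vv) v v' where "Xr = (\<lambda>x. fa_mon [Vx v, Vx v'] x - (if v = v' then fa_mon [Vx v] x else 0))"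
    | (se) e where "Xr = (\<lambda>x. fa_mon [Vx (s e), Ed e] x - fa_mon [Ed e] x)"
    | (er) e where "Xr = (\<lambda>x. fa_mon [Ed e, Vx (r e)] x - fa_mon [Ed e] x)"
    | (rg) e where "Xr = (\<lambda>x. fa_mon [Vx (r e), Gh e] x - fa_mon [Gh e] x)"
    | (gs) e where "Xr = (\<lambda>x. fa_mon [Gh e, Vx (s e)] x - fa_mon [Gh e] x)"
    | (ge) e e' where "Xr = (\<lambda>x. fa_mon [Gh e, Ed e'] x - (if e = e' then fa_mon [Vx (r e)] x else 0))"
    | (ck) v where "Xr = (\<lambda>x. fa_mon [Vx v] x - (\<Sum>e\<in>{e. s e = v}. fa_mon [Ed e, Gh e] x))"
        "finite {e. s e = v}"
    unfolding leavitt_rels_def by blast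
  then show "Xr \<in> kerK s r"
  proof cases
    case vv
    show ?thesis
    proof (cases "v = v'")
      case True
      then show ?thesis unfolding kerK_def fa_carrier_def vv
        by (auto simp: rho_mon_diff ind_two ind_one act1_def
            intro: finite_subset[of _ "{[Vx v', Vx v'], [Vx v']}"])
    next
      case False
      then show ?thesis unfolding kerK_def fa_carrier_def vv
        by (auto simp: rho_mon_diff0 rho_mon ind_two ind_one act1_def)
    qed
  next
    case se
    then show ?thesis unfolding kerK_def fa_carrier_def
      by (auto simp: rho_mon_diff ind_two ind_one act1_def inf_path_pcons
            intro: finite_subset[of _ "{[Vx (s e), Ed e], [Ed e]}"])
  next
    case er
    then show ?thesis unfolding kerK_def fa_carrier_def
      by (auto simp: rho_mon_diff ind_two ind_one act1_def inf_path_pcons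
            intro: finite_subset[of _ "{[Ed e, Vx (r e)], [Ed e]}"])
  next
    case rg
    then show ?thesis unfolding kerK_def fa_carrier_def
      by (auto simp: rho_mon_diff ind_two ind_one act1_def inf_path_tail inf_path_0
            intro: finite_subset[of _ "{[Vx (r e), Gh e], [Gh e]}"])
  next
    case gs
    then show ?thesis unfolding kerK_def fa_carrier_def
      by (auto simp: rho_mon_diff ind_two ind_one act1_def
            intro: finite_subset[of _ "{[Gh e, Vx (s e)], [Gh e]}"])
  next
    case ge
    show ?thesis
    proof (cases "e = e'")
      case True
      then show ?thesis unfolding kerK_def fa_carrier_def ge
        by (auto simp: rho_mon_diff ind_two ind_one act1_def inf_path_pcons
            intro: finite_subset[of _ "{[Gh e', Ed e'], [Vx (r e')]}"])
    next
      case False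
      then show ?thesis unfolding kerK_def fa_carrier_def ge
        by (auto simp: rho_mon_diff0 rho_mon ind_two ind_one act1_def inf_path_pcons)
    qed
  next
    case ck
    let ?E = "{e. s e = v}"
    have fin: "finite {x. Xr x \<noteq> 0}"
    proof (rule finite_subset[of _ "insert [Vx v] ((\<lambda>e. [Ed e, Gh e]) ` ?E)"])
      show "{x. Xr x \<noteq> 0} \<subseteq> insert [Vx v] ((\<lambda>e. [Ed e, Gh e]) ` ?E)"
        using ck(1) by (auto simp: fa_mon_def elim!: sum.not_neutral_contains_not_neutral split: if_splits)
    qed (use ck(2) in simp)
    have "rho s r Xr q q' = 0" for q q'
    proof -
      have fs: "finite {x. (\<Sum>e\<in>?E. (fa_mon [Ed e, Gh e] x :: 'k)) \<noteq> 0}"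
        by (rule finite_supp_sum) (use ck(2) in auto)
      have "rho s r Xr q q' = ind s r [Vx v] q q' - (\<Sum>e\<in>?E. ind s r [Ed e, Gh e] q q')"
        unfolding ck(1)
        by (subst rho_diff) (auto simp: fs rho_mon rho_sum ck(2))
      also have "(\<Sum>e\<in>?E. ind s r [Ed e, Gh e] q q') = (\<Sum>e\<in>?E. if e = q 0 then (if inf_path s r q \<and> q' = q then 1 else 0) else (0::'k))"
        by (rule sum.cong[OF refl])
          (auto simp: ind_two act1_def inf_path_pcons inf_path_tail inf_path_0 pcons_tail)
      also have "\<dots> = (if q 0 \<in> ?E then (if inf_path s r q \<and> q' = q then 1 else 0) else 0)"
        using ck(2) by (simp add: sum.delta')
      finally show ?thesis by (auto simp: ind_one act1_def)
    qed
    then show ?thesis unfolding kerK_def fa_carrier_def using fin by simp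
  qed
qed

lemma rels_carrier: "leavitt_rels s r \<subseteq> carrier (free_alg :: (('v, 'e) lgen list \<Rightarrow> 'k::field) ring)"
  using rels_sub_ker unfolding kerK_def fa_simps by blast

lemma lpa_ideal_ideal: "ideal (lpa_ideal s r) (free_alg :: (('v, 'e) lgen list \<Rightarrow> 'k::field) ring)"
  unfolding lpa_ideal_def by (rule ring.genideal_ideal[OF free_alg_ring rels_carrier])

lemma lpa_ideal_ker: "lpa_ideal s r \<subseteq> (kerK s r :: (('v, 'e) lgen list \<Rightarrow> 'k::field) set)"
  unfolding lpa_ideal_def by (rule ring.genideal_minimal[OF free_alg_ring kerK_ideal rels_sub_ker])

lemma class_rho:
  fixes F1 G1 :: "('v, 'e) lgen list \<Rightarrow> 'k::field"
  assumes "F1 \<in> fa_carrier" "G1 \<in> fa_carrier" "lpa_class s r F1 = lpa_class s r G1"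
  shows "rho s r F1 q q' = rho s r G1 q q'"
proof -
  have I: "ideal (lpa_ideal s r) (free_alg :: (('v, 'e) lgen list \<Rightarrow> 'k::field) ring)"
    by (rule lpa_ideal_ideal)
  have z: "(\<lambda>w. 0 :: 'k) \<in> lpa_ideal s r"
    using additive_subgroup.zero_closed[OF ideal.axioms(1)[OF I]] by (simp add: fa_simps)
  have "F1 \<in> lpa_class s r F1"
    unfolding lpa_class_def a_r_coset_def' using z
    by (auto simp: fa_simps intro!: bexI[where x="\<lambda>w. 0"])
  then have "F1 \<in> lpa_class s r G1" using assms(3) by simp
  then obtain h where h: "h \<in> lpa_ideal s r" "F1 = (\<lambda>w. h w + G1 w)"
    unfolding lpa_class_def a_r_coset_def' by (auto simp: fa_simps)
  have hk: "h \<in> kerK s r" using h(1) lpa_ideal_ker by blast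
  then have "finite {w. h w \<noteq> 0}" "rho s r h q q' = 0" by (auto simp: kerK_def fa_carrier_def)
  then show ?thesis using h(2) rho_add[of h G1] assms(2) by (simp add: fa_carrier_def)
qed

end

lemma (in ring) unit_nilp:
  assumes g: "g \<in> carrier R" and gg: "g \<otimes> g = \<zero>" and z: "z \<in> carrier R" and z': "z' \<in> carrier R"
    and comm: "g \<otimes> z' = z' \<otimes> g" and zz: "z \<oplus> z' = \<zero>"
  shows "(\<one> \<oplus> z \<otimes> g) \<otimes> (\<one> \<oplus> z' \<otimes> g) = \<one>"
proof -
  have h1: "z \<otimes> g \<otimes> (z' \<otimes> g) = \<zero>"
  proof -
    have "z \<otimes> g \<otimes> (z' \<otimes> g) = z \<otimes> ((g \<otimes> z') \<otimes> g)" using g z z' by (simp add: m_assoc)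
    also have "\<dots> = z \<otimes> (z' \<otimes> (g \<otimes> g))" using g z z' comm by (simp add: m_assoc)
    also have "\<dots> = \<zero>" using gg z z' by simp
    finally show ?thesis .
  qed
  have h2: "z' \<otimes> g \<oplus> z \<otimes> g = \<zero>"
    using zz g z z' by (simp add: l_distr[symmetric] a_comm)
  have "(\<one> \<oplus> z \<otimes> g) \<otimes> (\<one> \<oplus> z' \<otimes> g) = \<one> \<oplus> (z' \<otimes> g \<oplus> z \<otimes> g) \<oplus> z \<otimes> g \<otimes> (z' \<otimes> g)"
    using g z z' by (simp add: l_distr r_distr a_assoc a_lcomm)
  also have "\<dots> = \<one>" using h1 h2 by simp
  finally show ?thesis .
qed

lemma mon_mult: "fa_mult (fa_mon u) (fa_mon v) = (fa_mon (u @ v) :: 'g list \<Rightarrow> 'k::field)"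
proof (rule ext)
  fix w
  show "fa_mult (fa_mon u) (fa_mon v) w = (fa_mon (u @ v) w :: 'k)"
  proof (cases "w = u @ v")
    case True
    have "fa_mult (fa_mon u) (fa_mon v) w = (\<Sum>x\<in>{(u, v)}. (case x of (a, b) \<Rightarrow> (fa_mon u a * fa_mon v b :: 'k)))"
      unfolding fa_mult_def
      apply (rule sum.mono_neutral_right)
        apply simp
      using True apply simp
      by (auto simp: fa_mon_def split: if_splits)
    then show ?thesis using True by (simp add: fa_mon_def)
  next
    case False
    then show ?thesis unfolding fa_mult_def
      by (auto simp: fa_mon_def intro!: sum.neutral split: if_splits)
  qed
qed

lemma fa_mult_smult_l: "fa_mult (\<lambda>x. c * F x) G = (\<lambda>x. c * fa_mult F G x)"
  unfolding fa_mult_def by (auto simp: sum_distrib_left case_prod_unfold mult.assoc)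

lemma fa_mult_smult_r: "fa_mult F (\<lambda>x. c * G x) = (\<lambda>x. (c::'k::field) * fa_mult F G x)"
  unfolding fa_mult_def by (auto simp: sum_distrib_left case_prod_unfold mult.left_commute)

lemma fa_carrier_mon[simp]: "fa_mon w \<in> fa_carrier"
  by (simp add: fa_carrier_def)

lemma fa_carrier_smult[simp]: "F \<in> fa_carrier \<Longrightarrow> (\<lambda>x. c * F x) \<in> fa_carrier"
  unfolding fa_carrier_def by (auto intro: finite_subset[of _ "{w. F w \<noteq> 0}"])

lemma fa_carrier_add[simp]: "F \<in> fa_carrier \<Longrightarrow> G \<in> fa_carrier \<Longrightarrow> (\<lambda>x. F x + G x) \<in> fa_carrier"
  unfolding fa_carrier_def by (auto intro: finite_subset[of _ "{w. F w \<noteq> 0} \<union> {w. G w \<noteq> 0}"])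

context
  fixes s r :: "'e \<Rightarrow> 'v"
begin

lemma L_ring: "ring (LPA s r :: (('v, 'e) lgen list \<Rightarrow> 'k::field) set ring)"
  unfolding LPA_def by (rule ideal.quotient_is_ring[OF lpa_ideal_ideal])

lemma cls_hom: "lpa_class s r \<in> ring_hom free_alg (LPA s r :: (('v, 'e) lgen list \<Rightarrow> 'k::field) set ring)"
proof -
  have "lpa_class s r = (\<lambda>x. lpa_ideal s r +>\<^bsub>(free_alg :: (('v, 'e) lgen list \<Rightarrow> 'k::field) ring)\<^esub> x)"
    by (rule ext) (simp add: lpa_class_def)
  then show ?thesis unfolding LPA_def using ideal.rcos_ring_hom[OF lpa_ideal_ideal] by simp
qed

lemma cls_mult: "F \<in> fa_carrier \<Longrightarrow> G \<in> fa_carrier \<Longrightarrow>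
   lpa_class s r (fa_mult F G) = lpa_class s r F \<otimes>\<^bsub>(LPA s r :: (('v, 'e) lgen list \<Rightarrow> 'k::field) set ring)\<^esub> lpa_class s r G"
  using ring_hom_mult[OF cls_hom, of F G] by (simp add: fa_simps)

lemma cls_add: "F \<in> fa_carrier \<Longrightarrow> G \<in> fa_carrier \<Longrightarrow>
   lpa_class s r (\<lambda>x. F x + G x) = lpa_class s r F \<oplus>\<^bsub>(LPA s r :: (('v, 'e) lgen list \<Rightarrow> 'k::field) set ring)\<^esub> lpa_class s r G"
  using ring_hom_add[OF cls_hom, of F G] by (simp add: fa_simps)

lemma cls_one: "lpa_class s r (fa_mon []) = \<one>\<^bsub>(LPA s r :: (('v, 'e) lgen list \<Rightarrow> 'k::field) set ring)\<^esub>"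
  using ring_hom_one[OF cls_hom] by (simp add: fa_simps)

lemma cls_zero: "lpa_class s r (\<lambda>x. 0) = \<zero>\<^bsub>(LPA s r :: (('v, 'e) lgen list \<Rightarrow> 'k::field) set ring)\<^esub>"
  using ring_hom_zero[OF cls_hom free_alg_ring L_ring] by (simp add: fa_simps)

lemma cls_closed: "F \<in> fa_carrier \<Longrightarrow> lpa_class s r F \<in> carrier (LPA s r :: (('v, 'e) lgen list \<Rightarrow> 'k::field) set ring)"
  using ring_hom_closed[OF cls_hom, of F] by (simp add: fa_simps)

lemma cls_surj: "y \<in> carrier (LPA s r :: (('v, 'e) lgen list \<Rightarrow> 'k::field) set ring) \<Longrightarrow> \<exists>Y\<in>fa_carrier. y = lpa_class s r Y"
  unfolding LPA_def FactRing_def A_RCOSETS_def' lpa_class_def by (auto simp: fa_simps)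

lemma cls_ideal: "F \<in> lpa_ideal s r \<Longrightarrow> lpa_class s r F = \<zero>\<^bsub>(LPA s r :: (('v, 'e) lgen list \<Rightarrow> 'k::field) set ring)\<^esub>"
  unfolding lpa_class_def
  using ring.a_rcos_zero[OF free_alg_ring lpa_ideal_ideal, of F]
  by (simp add: LPA_def FactRing_def)

lemma rels_in_ideal: "leavitt_rels s r \<subseteq> (lpa_ideal s r :: (('v, 'e) lgen list \<Rightarrow> 'k::field) set)"
  unfolding lpa_ideal_def by (rule ring.genideal_self[OF free_alg_ring rels_carrier])

lemma cls_rel:
  assumes "(\<lambda>x. fa_mon A x - fa_mon B x :: 'k::field) \<in> leavitt_rels s r"
  shows "lpa_class s r (fa_mon A) = (lpa_class s r (fa_mon B) :: (('v, 'e) lgen list \<Rightarrow> 'k::field) set)"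
proof -
  let ?D = "(\<lambda>x. fa_mon A x - fa_mon B x) :: ('v, 'e) lgen list \<Rightarrow> 'k"
  have D: "?D \<in> lpa_ideal s r"
    by (rule subsetD[OF rels_in_ideal assms])
  have Dc: "?D \<in> fa_carrier" using D lpa_ideal_ker unfolding kerK_def by blast
  have "fa_mon A = (\<lambda>x. ?D x + fa_mon B x)" by auto
  then have "lpa_class s r (fa_mon A) = lpa_class s r ?D \<oplus>\<^bsub>(LPA s r :: (('v, 'e) lgen list \<Rightarrow> 'k::field) set ring)\<^esub> lpa_class s r (fa_mon B)"
    using cls_add[OF Dc, of "fa_mon B"] by simp
  also have "\<dots> = lpa_class s r (fa_mon B)"
    using cls_ideal[OF D] ring.ring_simprules(8)[OF L_ring cls_closed[of "fa_mon B"]] by simp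
  finally show ?thesis .
qed

lemma cls_rel0:
  assumes "(\<lambda>x. fa_mon A x - 0 :: 'k::field) \<in> leavitt_rels s r"
  shows "lpa_class s r (fa_mon A) = \<zero>\<^bsub>(LPA s r :: (('v, 'e) lgen list \<Rightarrow> 'k::field) set ring)\<^esub>"
proof -
  have D: "(fa_mon A :: ('v, 'e) lgen list \<Rightarrow> 'k) \<in> lpa_ideal s r"
    using subsetD[OF rels_in_ideal assms] by simp
  then show ?thesis by (rule cls_ideal)
qed

end

definition Pk :: "'k::field \<Rightarrow> 'g \<Rightarrow> 'g list \<Rightarrow> 'k" where
  "Pk c g = (\<lambda>x. fa_mon [] x + c * fa_mon [g] x)"

lemma Pk_carrier[simp]: "Pk c g \<in> fa_carrier"
  unfolding Pk_def by simp

lemma rel_gs: "(\<lambda>x. fa_mon [Gh e, Vx (s e)] x - fa_mon [Gh e] x :: 'k::field) \<in> leavitt_rels s r"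
  unfolding leavitt_rels_def by blast
lemma rel_rg: "(\<lambda>x. fa_mon [Vx (r e), Gh e] x - fa_mon [Gh e] x :: 'k::field) \<in> leavitt_rels s r"
  unfolding leavitt_rels_def by blast
lemma rel_er: "(\<lambda>x. fa_mon [Ed e, Vx (r e)] x - fa_mon [Ed e] x :: 'k::field) \<in> leavitt_rels s r"
  unfolding leavitt_rels_def by blast
lemma rel_se: "(\<lambda>x. fa_mon [Vx (s e), Ed e] x - fa_mon [Ed e] x :: 'k::field) \<in> leavitt_rels s r"
  unfolding leavitt_rels_def by blast
lemma rel_vv: "v \<noteq> v' \<Longrightarrow> (\<lambda>x. fa_mon [Vx v, Vx v'] x - 0 :: 'k::field) \<in> leavitt_rels s r"
proof -
  assume "v \<noteq> v'"
  then have "(\<lambda>x. fa_mon [Vx v, Vx v'] x - 0 :: 'k::field) = (\<lambda>x. fa_mon [Vx v, Vx v'] x - (if v = v' then fa_mon [Vx v] x else 0))"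
    by simp
  then show ?thesis unfolding leavitt_rels_def by blast
qed
lemma fa_carrier_mult[simp]: "F \<in> fa_carrier \<Longrightarrow> G \<in> fa_carrier \<Longrightarrow> fa_mult F G \<in> (fa_carrier :: ('g list \<Rightarrow> 'k::field) set)"
  unfolding fa_carrier_def by (auto intro: fa_mult_carrier)

context
  fixes s r :: "'e \<Rightarrow> 'v" and f :: 'e
  assumes sr: "s f \<noteq> r f"
begin

abbreviation LL where "LL \<equiv> (LPA s r :: (('v, 'e) lgen list \<Rightarrow> 'k::field) set ring)"

definition sc :: "'k::field \<Rightarrow> (('v, 'e) lgen list \<Rightarrow> 'k) set" where
  "sc c = lpa_class s r (\<lambda>x. c * fa_mon [] x)"

definition mon :: "('v, 'e) lgen list \<Rightarrow> (('v, 'e) lgen list \<Rightarrow> 'k::field) set" where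
  "mon w = lpa_class s r (fa_mon w)"

lemma sc_closed[simp]: "sc c \<in> carrier LL"
  unfolding sc_def by (rule cls_closed) simp

lemma mon_closed[simp]: "mon w \<in> carrier LL"
  unfolding mon_def by (rule cls_closed) simp

lemma mon_app: "mon (u @ v) = (mon u \<otimes>\<^bsub>LL\<^esub> mon v :: (('v, 'e) lgen list \<Rightarrow> 'k::field) set)"
  unfolding mon_def by (simp add: mon_mult[symmetric] cls_mult)

lemma cls_Pk: "lpa_class s r (Pk (c::'k::field) g) = (\<one>\<^bsub>LL\<^esub> \<oplus>\<^bsub>LL\<^esub> sc c \<otimes>\<^bsub>LL\<^esub> mon [g] :: (('v, 'e) lgen list \<Rightarrow> 'k::field) set)"
proof -
  have "Pk c g = (\<lambda>x. fa_mon [] x + fa_mult (\<lambda>x. c * fa_mon [] x) (fa_mon [g]) x)"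
    unfolding Pk_def fa_mult_smult_l fa_mult_one_left by simp
  then show ?thesis
    by (simp add: cls_add cls_mult cls_one sc_def mon_def fa_mult_carrier)
qed

lemma sc_central: "y \<in> carrier LL \<Longrightarrow> sc (c::'k::field) \<otimes>\<^bsub>LL\<^esub> y = y \<otimes>\<^bsub>LL\<^esub> sc c"
proof -
  assume "y \<in> carrier LL"
  then obtain Y where Y: "Y \<in> fa_carrier" "y = lpa_class s r Y" using cls_surj by blast
  have "fa_mult (\<lambda>x. c * fa_mon [] x) Y = fa_mult Y (\<lambda>x. c * fa_mon [] x)"
    by (simp add: fa_mult_smult_l fa_mult_smult_r fa_mult_one_left fa_mult_one_right)
  then show ?thesis using Y by (simp add: sc_def cls_mult[symmetric])
qed

lemma sc_neg: "sc (c::'k::field) \<oplus>\<^bsub>LL\<^esub> sc (- c) = (\<zero>\<^bsub>LL\<^esub> :: (('v, 'e) lgen list \<Rightarrow> 'k::field) set)"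
proof -
  have "sc c \<oplus>\<^bsub>LL\<^esub> sc (- c) = (lpa_class s r (\<lambda>x. c * fa_mon [] x + (- c) * fa_mon [] x) :: (('v, 'e) lgen list \<Rightarrow> 'k::field) set)"
    unfolding sc_def by (rule cls_add[symmetric]) (rule fa_carrier_smult, simp)+
  also have "(\<lambda>x. c * fa_mon [] x + (- c) * fa_mon [] x) = (\<lambda>x. 0 :: 'k)" by simp
  finally show ?thesis by (simp add: cls_zero)
qed

lemma unit_Pk:
  assumes gg: "mon [g] \<otimes>\<^bsub>LL\<^esub> mon [g] = (\<zero>\<^bsub>LL\<^esub> :: (('v, 'e) lgen list \<Rightarrow> 'k::field) set)"
  shows "lpa_class s r (Pk c g) \<otimes>\<^bsub>LL\<^esub> lpa_class s r (Pk (- c) g) = (\<one>\<^bsub>LL\<^esub> :: (('v, 'e) lgen list \<Rightarrow> 'k::field) set)"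
  unfolding cls_Pk
  by (rule ring.unit_nilp[OF L_ring]) (auto simp: gg sc_central sc_neg)

lemma Pk_Units:
  assumes gg: "mon [g] \<otimes>\<^bsub>LL\<^esub> mon [g] = (\<zero>\<^bsub>LL\<^esub> :: (('v, 'e) lgen list \<Rightarrow> 'k::field) set)"
  shows "(lpa_class s r (Pk c g) :: (('v, 'e) lgen list \<Rightarrow> 'k::field) set) \<in> Units LL"
    and "inv\<^bsub>LL\<^esub> (lpa_class s r (Pk c g) :: (('v, 'e) lgen list \<Rightarrow> 'k::field) set) = lpa_class s r (Pk (- c) g)"
proof -
  have 1: "lpa_class s r (Pk c g) \<otimes>\<^bsub>LL\<^esub> lpa_class s r (Pk (- c) g) = (\<one>\<^bsub>LL\<^esub> :: (('v, 'e) lgen list \<Rightarrow> 'k::field) set)"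
    by (rule unit_Pk[OF gg])
  have 2: "lpa_class s r (Pk (- c) g) \<otimes>\<^bsub>LL\<^esub> lpa_class s r (Pk c g) = (\<one>\<^bsub>LL\<^esub> :: (('v, 'e) lgen list \<Rightarrow> 'k::field) set)"
    using unit_Pk[OF gg, of "- c"] by simp
  have c1: "(lpa_class s r (Pk c g) :: (('v, 'e) lgen list \<Rightarrow> 'k::field) set) \<in> carrier LL"
    by (rule cls_closed) simp
  have c2: "(lpa_class s r (Pk (- c) g) :: (('v, 'e) lgen list \<Rightarrow> 'k::field) set) \<in> carrier LL"
    by (rule cls_closed) simp
  show "(lpa_class s r (Pk c g) :: (('v, 'e) lgen list \<Rightarrow> 'k::field) set) \<in> Units LL"
    unfolding Units_def using 1 2 c1 c2 by blast
  show "inv\<^bsub>LL\<^esub> (lpa_class s r (Pk c g) :: (('v, 'e) lgen list \<Rightarrow> 'k::field) set) = lpa_class s r (Pk (- c) g)"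
    using monoid.inv_unique'[OF ring.is_monoid[OF L_ring] c1 c2 1 2] by simp
qed

lemma mon_rel: "(\<lambda>x. fa_mon A x - fa_mon B x :: 'k::field) \<in> leavitt_rels s r \<Longrightarrow> (mon A :: (('v, 'e) lgen list \<Rightarrow> 'k::field) set) = mon B"
  unfolding mon_def by (rule cls_rel)

lemma gh_sq: "mon [Gh f] \<otimes>\<^bsub>LL\<^esub> mon [Gh f] = (\<zero>\<^bsub>LL\<^esub> :: (('v, 'e) lgen list \<Rightarrow> 'k::field) set)"
proof -
  interpret R: ring LL by (rule L_ring)
  have r1: "(mon [Gh f] :: (('v, 'e) lgen list \<Rightarrow> 'k::field) set) = mon [Gh f] \<otimes>\<^bsub>LL\<^esub> mon [Vx (s f)]"
    using mon_rel[OF rel_gs[where 'k='k, of f s r]] mon_app[where 'k='k, of "[Gh f]" "[Vx (s f)]", symmetric] by simp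
  have r2: "(mon [Gh f] :: (('v, 'e) lgen list \<Rightarrow> 'k::field) set) = mon [Vx (r f)] \<otimes>\<^bsub>LL\<^esub> mon [Gh f]"
    using mon_rel[OF rel_rg[where 'k='k, of r f s]] mon_app[where 'k='k, of "[Vx (r f)]" "[Gh f]", symmetric] by simp
  have r3: "mon [Vx (s f)] \<otimes>\<^bsub>LL\<^esub> mon [Vx (r f)] = (\<zero>\<^bsub>LL\<^esub> :: (('v, 'e) lgen list \<Rightarrow> 'k::field) set)"
  proof -
    have "(\<lambda>x. fa_mon [Vx (s f), Vx (r f)] x - 0 :: 'k) \<in> leavitt_rels s r"
      by (rule rel_vv) (rule sr)
    then have "(mon [Vx (s f), Vx (r f)] :: (('v, 'e) lgen list \<Rightarrow> 'k::field) set) = \<zero>\<^bsub>LL\<^esub>"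
      unfolding mon_def by (rule cls_rel0)
    then show ?thesis using mon_app[where 'k='k, of "[Vx (s f)]" "[Vx (r f)]"] by simp
  qed
  have "mon [Gh f] \<otimes>\<^bsub>LL\<^esub> mon [Gh f] = (mon [Gh f] \<otimes>\<^bsub>LL\<^esub> mon [Vx (s f)]) \<otimes>\<^bsub>LL\<^esub> (mon [Vx (r f)] \<otimes>\<^bsub>LL\<^esub> (mon [Gh f] :: (('v, 'e) lgen list \<Rightarrow> 'k::field) set))"
    using r1 r2 by simp
  also have "\<dots> = mon [Gh f] \<otimes>\<^bsub>LL\<^esub> (mon [Vx (s f)] \<otimes>\<^bsub>LL\<^esub> mon [Vx (r f)]) \<otimes>\<^bsub>LL\<^esub> mon [Gh f]"
    by (simp add: R.m_assoc)
  also have "\<dots> = \<zero>\<^bsub>LL\<^esub>" using r3 by simp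
  finally show ?thesis .
qed

lemma ed_sq: "mon [Ed f] \<otimes>\<^bsub>LL\<^esub> mon [Ed f] = (\<zero>\<^bsub>LL\<^esub> :: (('v, 'e) lgen list \<Rightarrow> 'k::field) set)"
proof -
  interpret R: ring LL by (rule L_ring)
  have r1: "(mon [Ed f] :: (('v, 'e) lgen list \<Rightarrow> 'k::field) set) = mon [Ed f] \<otimes>\<^bsub>LL\<^esub> mon [Vx (r f)]"
    using mon_rel[OF rel_er[where 'k='k, of f r s]] mon_app[where 'k='k, of "[Ed f]" "[Vx (r f)]", symmetric] by simp
  have r2: "(mon [Ed f] :: (('v, 'e) lgen list \<Rightarrow> 'k::field) set) = mon [Vx (s f)] \<otimes>\<^bsub>LL\<^esub> mon [Ed f]"
    using mon_rel[OF rel_se[where 'k='k, of s f r]] mon_app[where 'k='k, of "[Vx (s f)]" "[Ed f]", symmetric] by simp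
  have r3: "mon [Vx (r f)] \<otimes>\<^bsub>LL\<^esub> mon [Vx (s f)] = (\<zero>\<^bsub>LL\<^esub> :: (('v, 'e) lgen list \<Rightarrow> 'k::field) set)"
  proof -
    have "(\<lambda>x. fa_mon [Vx (r f), Vx (s f)] x - 0 :: 'k) \<in> leavitt_rels s r"
      by (rule rel_vv) (use sr in auto)
    then have "(mon [Vx (r f), Vx (s f)] :: (('v, 'e) lgen list \<Rightarrow> 'k::field) set) = \<zero>\<^bsub>LL\<^esub>"
      unfolding mon_def by (rule cls_rel0)
    then show ?thesis using mon_app[where 'k='k, of "[Vx (r f)]" "[Vx (s f)]"] by simp
  qed
  have "mon [Ed f] \<otimes>\<^bsub>LL\<^esub> mon [Ed f] = (mon [Ed f] \<otimes>\<^bsub>LL\<^esub> mon [Vx (r f)]) \<otimes>\<^bsub>LL\<^esub> (mon [Vx (s f)] \<otimes>\<^bsub>LL\<^esub> (mon [Ed f] :: (('v, 'e) lgen list \<Rightarrow> 'k::field) set))"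
    using r1 r2 by simp
  also have "\<dots> = mon [Ed f] \<otimes>\<^bsub>LL\<^esub> (mon [Vx (r f)] \<otimes>\<^bsub>LL\<^esub> mon [Vx (s f)]) \<otimes>\<^bsub>LL\<^esub> mon [Ed f]"
    by (simp add: R.m_assoc)
  also have "\<dots> = \<zero>\<^bsub>LL\<^esub>" using r3 by simp
  finally show ?thesis .
qed

end

context
  fixes s r :: "'e \<Rightarrow> 'v"
begin

lemma rho_zero_out:
  fixes G :: "('v, 'e) lgen list \<Rightarrow> 'k::field"
  assumes "\<And>v. G v \<noteq> 0 \<Longrightarrow> act s r v q \<noteq> Some q'"
  shows "rho s r G q q' = 0"
  unfolding rho_def ind_def using assms by (auto intro!: sum.neutral)

lemma rho_mult2:
  fixes F G :: "('v, 'e) lgen list \<Rightarrow> 'k::field"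
  assumes fF: "finite {w. F w \<noteq> 0}" and fG: "finite {w. G w \<noteq> 0}"
    and fQ: "finite Q" and Q: "\<And>q'. rho s r G q q' \<noteq> 0 \<Longrightarrow> q' \<in> Q"
  shows "rho s r (fa_mult F G) q q'' = (\<Sum>q'\<in>Q. rho s r G q q' * rho s r F q' q'')"
proof -
  let ?R = "(\<lambda>v. the (act s r v q)) ` {v. G v \<noteq> 0}"
  let ?h = "\<lambda>q'. rho s r G q q' * rho s r F q' q''"
  have fR: "finite ?R" using fG by simp
  have "rho s r (fa_mult F G) q q'' = (\<Sum>q'\<in>?R. ?h q')"
    apply (rule rho_mult[OF fF fG fR])
    by (metis (mono_tags, lifting) image_eqI mem_Collect_eq option.sel)
  also have "\<dots> = (\<Sum>q'\<in>?R \<union> Q. ?h q')"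
  proof (rule sum.mono_neutral_left)
    show "\<forall>i\<in>?R \<union> Q - ?R. ?h i = 0"
    proof
      fix i assume "i \<in> ?R \<union> Q - ?R"
      then have "\<And>v. G v \<noteq> 0 \<Longrightarrow> act s r v q \<noteq> Some i"
        by (metis (mono_tags, lifting) DiffD2 image_eqI mem_Collect_eq option.sel)
      then have "rho s r G q i = 0" by (rule rho_zero_out)
      then show "?h i = 0" by simp
    qed
  qed (use fR fQ in auto)
  also have "\<dots> = (\<Sum>q'\<in>Q. ?h q')"
  proof (rule sum.mono_neutral_right)
    show "\<forall>i\<in>?R \<union> Q - Q. ?h i = 0" using Q by auto
  qed (use fR fQ in auto)
  finally show ?thesis .
qed

lemma rho_Pk:
  "rho s r (Pk c g) q q'' = (if q'' = q then 1 else 0) + c * (ind s r [g] q q'' :: 'k::field)"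
proof -
  have "rho s r (Pk c g) q q'' = rho s r (fa_mon []) q q'' + rho s r (\<lambda>x. c * fa_mon [g] x) q q''"
    unfolding Pk_def by (rule rho_add) auto
  also have "\<dots> = (if q'' = q then 1 else 0) + c * ind s r [g] q q''"
    by (simp add: rho_smult rho_mon) (auto simp: ind_def)
  finally show ?thesis .
qed

end

fun wm :: "(bool \<times> bool) list \<Rightarrow> int \<times> int \<Rightarrow> int \<times> int" where
  "wm [] v = v"
| "wm (l # w) v = (let (x, y) = wm w v; c = (if fst l then 2 else -2 :: int) in
     if snd l then (x + c * y, y) else (x, y + c * x))"

definition ckk :: "bool \<times> bool \<Rightarrow> 'k::field" where
  "ckk l = (if fst l then 2 else -2)"

definition gkk :: "'e \<Rightarrow> bool \<times> bool \<Rightarrow> ('v, 'e) lgen" where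
  "gkk f l = (if snd l then Gh f else Ed f)"

fun prodK :: "'e \<Rightarrow> (bool \<times> bool) list \<Rightarrow> ('v, 'e) lgen list \<Rightarrow> 'k::field" where
  "prodK f [] = fa_mon []"
| "prodK f (l # w) = fa_mult (Pk (ckk l) (gkk f l)) (prodK f w)"

lemma prodK_carrier[simp]: "prodK f w \<in> fa_carrier"
  by (induction w) auto

context
  fixes s r :: "'e \<Rightarrow> 'v" and f :: 'e and p :: "nat \<Rightarrow> 'e"
  assumes path: "inf_path s r p" and sr: "s f \<noteq> r f" and rp: "r f = s (p 0)"
begin

lemma p0_ne: "p 0 \<noteq> f"
  using sr rp by auto

lemma q01_ne: "p \<noteq> pcons f p"
proof
  assume "p = pcons f p"
  then have "p 0 = f" by (metis pcons_simps(1))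
  then show False using p0_ne by simp
qed

lemma q1_path: "inf_path s r (pcons f p)"
  using path rp by (simp add: inf_path_pcons)

definition Vv :: "int \<times> int \<Rightarrow> (nat \<Rightarrow> 'e) \<Rightarrow> 'k::field" where
  "Vv v q' = (if q' = p then of_int (fst v) else 0) + (if q' = pcons f p then of_int (snd v) else 0)"

lemma ind_Gh0: "ind s r [Gh f] p q'' = 0"
  by (simp add: ind_def act1_def p0_ne)

lemma ind_Gh1: "ind s r [Gh f] (pcons f p) q'' = (if q'' = p then 1 else 0)"
  using q1_path by (auto simp: ind_def act1_def)

lemma ind_Ed0: "ind s r [Ed f] p q'' = (if q'' = pcons f p then 1 else 0)"
  using path rp by (auto simp: ind_def act1_def)

lemma ind_Ed1: "ind s r [Ed f] (pcons f p) q'' = 0"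
  using q1_path sr by (auto simp: ind_def act1_def)

lemma rho_prodK:
  "rho s r (prodK f w) p q'' = (Vv (wm w (1, 0)) q'' :: 'k::field) \<and>
   rho s r (prodK f w) (pcons f p) q'' = (Vv (wm w (0, 1)) q'' :: 'k::field)"
proof (induction w arbitrary: q'')
  case Nil
  show ?case using q01_ne by (auto simp: rho_mon ind_def Vv_def)
next
  case (Cons l w)
  let ?P = "Pk (ckk l) (gkk f l) :: ('v, 'e) lgen list \<Rightarrow> 'k"
  have step: "rho s r (prodK f (l # w)) qq q'' = (Vv (wm (l # w) v) q'' :: 'k)"
    if hq: "\<And>q''. rho s r (prodK f w) qq q'' = (Vv (wm w v) q'' :: 'k)" for qq v
  proof -
    obtain x y where xy: "wm w v = (x, y)" by fastforce
    have fin1: "finite {w. ?P w \<noteq> 0}" using Pk_carrier[of "ckk l" "gkk f l"] by (simp add: fa_carrier_def)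
    have fin2: "finite {wa. (prodK f w :: ('v, 'e) lgen list \<Rightarrow> 'k) wa \<noteq> 0}"
      using prodK_carrier[of f w] by (simp add: fa_carrier_def)
    have "rho s r (prodK f (l # w)) qq q'' = (\<Sum>q'\<in>{p, pcons f p}. rho s r (prodK f w) qq q' * rho s r ?P q' q'')"
      unfolding prodK.simps
      by (rule rho_mult2[OF fin1 fin2]) (auto simp: hq Vv_def split: if_splits)
    also have "\<dots> = of_int x * rho s r ?P p q'' + of_int y * rho s r ?P (pcons f p) q''"
      using q01_ne by (simp add: hq xy Vv_def)
    also have "\<dots> = Vv (wm (l # w) v) q''"
      using q01_ne
      by (cases l) (auto simp: xy rho_Pk ckk_def gkk_def ind_Gh0 ind_Gh1 ind_Ed0 ind_Ed1 Vv_def algebra_simps)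
    finally show ?thesis .
  qed
  show ?case using step Cons.IH by blast
qed

end

definition lm :: "bool \<times> bool \<Rightarrow> int \<times> int \<Rightarrow> int \<times> int" where
  "lm l v = (let (x, y) = v; c = (if fst l then 2 else -2 :: int) in
     if snd l then (x + c * y, y) else (x, y + c * x))"

definition sgc :: "bool \<Rightarrow> int \<Rightarrow> int \<Rightarrow> bool" where
  "sgc sg x y = (if sg then (x > 0 \<and> y > 0 \<or> x < 0 \<and> y < 0) else (x > 0 \<and> y < 0 \<or> x < 0 \<and> y > 0))"

definition SS :: "bool \<times> bool \<Rightarrow> int \<times> int \<Rightarrow> bool" where
  "SS l v = (sgc (fst l) (fst v) (snd v) \<and> (if snd l then \<bar>fst v\<bar> > \<bar>snd v\<bar> else \<bar>snd v\<bar> > \<bar>fst v\<bar>))"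

definition DD :: "bool \<times> bool \<Rightarrow> int \<times> int \<Rightarrow> bool" where
  "DD l v = ((if snd l then \<bar>snd v\<bar> > \<bar>fst v\<bar> else \<bar>fst v\<bar> > \<bar>snd v\<bar>) \<or> SS l v)"

lemma a1: "\<bar>y\<bar> > \<bar>x\<bar> \<or> ((x>0\<and>y>0 \<or> x<0\<and>y<0) \<and> \<bar>x\<bar>>\<bar>y\<bar>) \<Longrightarrow> ((x+2*y>0 \<and> y>0 \<or> x+2*y<0 \<and> y<0) \<and> \<bar>x+2*y\<bar> > \<bar>y\<bar>)" for x y :: int
  by arith
lemma a2: "\<bar>y\<bar> > \<bar>x\<bar> \<or> ((x>0\<and>y<0 \<or> x<0\<and>y>0) \<and> \<bar>x\<bar>>\<bar>y\<bar>) \<Longrightarrow> ((x-2*y>0 \<and> y<0 \<or> x-2*y<0 \<and> y>0) \<and> \<bar>x-2*y\<bar> > \<bar>y\<bar>)" for x y :: int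
  by arith

lemma lm_step: "DD l v \<Longrightarrow> SS l (lm l v)"
proof -
  assume h: "DD l v"
  obtain sg k where l: "l = (sg, k)" by fastforce
  obtain x y where v: "v = (x, y)" by fastforce
  show ?thesis
  proof (cases k)
    case True
    then show ?thesis
    proof (cases sg)
      case True
      then show ?thesis using h a1[of x y] \<open>k\<close> unfolding l v DD_def SS_def lm_def sgc_def by auto
    next
      case False
      then show ?thesis using h a2[of x y] \<open>k\<close> unfolding l v DD_def SS_def lm_def sgc_def by auto
    qed
  next
    case False
    then show ?thesis
    proof (cases sg)
      case True
      then show ?thesis using h a1[of y x] \<open>\<not> k\<close> unfolding l v DD_def SS_def lm_def sgc_def by (auto simp: add.commute)
    next
      case False
      then show ?thesis using h a2[of y x] \<open>\<not> k\<close> unfolding l v DD_def SS_def lm_def sgc_def by auto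
    qed
  qed
qed

lemma SS_DD: "SS l' u \<Longrightarrow> \<not> (snd l = snd l' \<and> fst l \<noteq> fst l') \<Longrightarrow> DD l u"
proof -
  assume h: "SS l' u" "\<not> (snd l = snd l' \<and> fst l \<noteq> fst l')"
  show ?thesis
  proof (cases "snd l = snd l'")
    case True
    then have "l = l'" using h(2) by (simp add: prod_eq_iff)
    then show ?thesis using h(1) by (simp add: DD_def)
  next
    case False
    then show ?thesis using h(1) unfolding DD_def SS_def by (cases "snd l") auto
  qed
qed

definition red_k :: "(bool \<times> bool) list \<Rightarrow> bool" where
  "red_k w \<longleftrightarrow> (\<forall>i. Suc i < length w \<longrightarrow> \<not> (snd (w ! i) = snd (w ! Suc i) \<and> fst (w ! i) \<noteq> fst (w ! Suc i)))"

lemma red_k_tl: "red_k (l # w) \<Longrightarrow> red_k w"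
  unfolding red_k_def
proof (intro allI impI)
  fix i assume h: "\<forall>i. Suc i < length (l # w) \<longrightarrow> \<not> (snd ((l # w) ! i) = snd ((l # w) ! Suc i) \<and> fst ((l # w) ! i) \<noteq> fst ((l # w) ! Suc i))"
    and i: "Suc i < length w"
  show "\<not> (snd (w ! i) = snd (w ! Suc i) \<and> fst (w ! i) \<noteq> fst (w ! Suc i))"
    using h[rule_format, of "Suc i"] i by simp
qed

lemma red_k_hd: "red_k (l # l' # w) \<Longrightarrow> \<not> (snd l = snd l' \<and> fst l \<noteq> fst l')"
  unfolding red_k_def by (drule spec[of _ 0]) simp

fun wmm :: "(bool \<times> bool) list \<Rightarrow> int \<times> int \<Rightarrow> int \<times> int" where
  "wmm [] v = v"
| "wmm (l # w) v = lm l (wmm w v)"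

lemma pingpong: "w \<noteq> [] \<Longrightarrow> red_k w \<Longrightarrow> DD (last w) v \<Longrightarrow> SS (hd w) (wmm w v)"
proof (induction w)
  case Nil
  then show ?case by simp
next
  case (Cons l w)
  show ?case
  proof (cases w)
    case Nil
    then show ?thesis using Cons.prems lm_step by simp
  next
    case (Cons l' w')
    have "SS l' (wmm w v)" using Cons.IH Cons.prems \<open>w = l' # w'\<close> red_k_tl by fastforce
    then have "DD l (wmm w v)" using SS_DD red_k_hd Cons.prems(2) \<open>w = l' # w'\<close> by blast
    then show ?thesis using lm_step by simp
  qed
qed

lemma pingpong_ne:
  assumes "w \<noteq> []" "red_k w"
  defines "v0 \<equiv> (if snd (last w) then (0, 1) else (1, 0) :: int \<times> int)"
  shows "wmm w v0 \<noteq> v0"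
proof
  assume eq: "wmm w v0 = v0"
  have "DD (last w) v0" unfolding v0_def DD_def by auto
  then have "SS (hd w) (wmm w v0)" using pingpong assms by blast
  then have "SS (hd w) v0" using eq by simp
  moreover have "\<not> SS l (0, 1)" "\<not> SS l (1, 0)" for l unfolding SS_def sgc_def by auto
  ultimately show False unfolding v0_def by (auto split: if_splits)
qed


lemma wm_wmm: "wm w v = wmm w v"
  by (induction w) (auto simp: lm_def split: prod.splits)

lemma of_int_inj_k: "(of_int x :: 'k::field_char_0) = of_int y \<Longrightarrow> x = y"
  by simp

context
  fixes s r :: "'e \<Rightarrow> 'v" and f :: 'e and p :: "nat \<Rightarrow> 'e"
  assumes path: "inf_path s r p" and sr: "s f \<noteq> r f" and rp: "r f = s (p 0)"
begin

lemma Vv_inj: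
  assumes "\<And>q. (Vv f p u q :: 'k::field_char_0) = Vv f p v q"
  shows "u = v"
proof -
  have n: "p \<noteq> pcons f p" by (rule q01_ne[OF path sr rp])
  have "(of_int (fst u) :: 'k) = of_int (fst v)"
    using assms[of p] n by (simp add: Vv_def[OF path sr rp])
  moreover have "(of_int (snd u) :: 'k) = of_int (snd v)"
    using assms[of "pcons f p"] n by (simp add: Vv_def[OF path sr rp])
  ultimately show ?thesis by (simp add: prod_eq_iff)
qed

lemma prodK_ne_one:
  assumes "w \<noteq> []" "red_k w"
  shows "lpa_class s r (prodK f w) \<noteq> (lpa_class s r (fa_mon []) :: (('v, 'e) lgen list \<Rightarrow> 'k::field_char_0) set)"
proof
  assume eq: "lpa_class s r (prodK f w) = (lpa_class s r (fa_mon []) :: (('v, 'e) lgen list \<Rightarrow> 'k::field_char_0) set)"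
  define v0 where "v0 = (if snd (last w) then (0, 1) else (1, 0) :: int \<times> int)"
  define qs where "qs = (if snd (last w) then pcons f p else p)"
  have n: "p \<noteq> pcons f p" by (rule q01_ne[OF path sr rp])
  have "Vv f p (wm w v0) q = (Vv f p v0 q :: 'k)" for q
  proof -
    have "Vv f p (wm w v0) q = (rho s r (prodK f w) qs q :: 'k)"
      using rho_prodK[where 'k='k, OF path sr rp, of w q] unfolding v0_def qs_def by (auto split: if_splits)
    also have "\<dots> = rho s r (fa_mon []) qs q"
      by (rule class_rho) (use eq in auto)
    also have "\<dots> = Vv f p v0 q"
      using n by (auto simp: rho_mon ind_def Vv_def[OF path sr rp] v0_def qs_def)
    finally show ?thesis .
  qed
  then have "wm w v0 = v0" by (rule Vv_inj)
  then show False using pingpong_ne[OF assms] unfolding v0_def wm_wmm by simp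
qed

lemma ab_ne:
  "lpa_class s r (Pk 2 (Gh f)) \<noteq> (lpa_class s r (Pk 2 (Ed f)) :: (('v, 'e) lgen list \<Rightarrow> 'k::field_char_0) set)"
proof
  assume eq: "lpa_class s r (Pk 2 (Gh f)) = (lpa_class s r (Pk 2 (Ed f)) :: (('v, 'e) lgen list \<Rightarrow> 'k::field_char_0) set)"
  have n: "p \<noteq> pcons f p" by (rule q01_ne[OF path sr rp])
  have "rho s r (Pk 2 (Gh f)) (pcons f p) p = (rho s r (Pk 2 (Ed f)) (pcons f p) p :: 'k)"
    by (rule class_rho) (use eq in auto)
  then show False using n by (simp add: rho_Pk ind_Gh1[OF path sr rp] ind_Ed1[OF path sr rp])
qed

end

theorem lemma4p7:
  fixes s r :: "'e \<Rightarrow> 'v::finite"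
    and f :: 'e and p :: "nat \<Rightarrow> 'e"
  assumes "inf_path s r p"
    and "s f \<noteq> r f" and "r f = s (p 0)"
  defines "L \<equiv> (LPA s r :: (('v, 'e) lgen list \<Rightarrow> 'k::field_char_0) set ring)"
    and "a \<equiv> lpa_class s r (\<lambda>x. fa_mon [] x + 2 * fa_mon [Gh f] x) :: (('v, 'e) lgen list \<Rightarrow> 'k) set"
    and "b \<equiv> lpa_class s r (\<lambda>x. fa_mon [] x + 2 * fa_mon [Ed f] x) :: (('v, 'e) lgen list \<Rightarrow> 'k) set"
  shows "a \<in> Units L \<and> b \<in> Units L \<and>
         free_group ((units_of L)\<lparr>carrier := generate (units_of L) {a, b}\<rparr>) \<and>
         \<not> cyclic_group ((units_of L)\<lparr>carrier := generate (units_of L) {a, b}\<rparr>)"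
proof -
  note path = assms(1) and sr = assms(2) and rp = assms(3)
  interpret R: ring L unfolding L_def by (rule L_ring)
  have aP: "a = lpa_class s r (Pk 2 (Gh f))" by (simp add: a_def Pk_def)
  have bP: "b = lpa_class s r (Pk 2 (Ed f))" by (simp add: b_def Pk_def)
  have aU: "a \<in> Units L"
    using Pk_Units(1)[where 'k='k and s=s and r=r and f=f, OF sr gh_sq[where s=s and r=r and f=f, OF sr], of 2] unfolding aP L_def .
  have aI: "inv\<^bsub>L\<^esub> a = lpa_class s r (Pk (- 2) (Gh f))"
    using Pk_Units(2)[where 'k='k and s=s and r=r and f=f, OF sr gh_sq[where s=s and r=r and f=f, OF sr], of 2] unfolding aP L_def .
  have bU: "b \<in> Units L"
    using Pk_Units(1)[where 'k='k and s=s and r=r and f=f, OF sr ed_sq[where s=s and r=r and f=f, OF sr], of 2] unfolding bP L_def .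
  have bI: "inv\<^bsub>L\<^esub> b = lpa_class s r (Pk (- 2) (Ed f))"
    using Pk_Units(2)[where 'k='k and s=s and r=r and f=f, OF sr ed_sq[where s=s and r=r and f=f, OF sr], of 2] unfolding bP L_def .
  have ab: "a \<noteq> b" unfolding aP bP by (rule ab_ne[OF path sr rp])
  define U where "U = units_of L"
  define G where "G = generate U {a, b}"
  define H where "H = U\<lparr>carrier := G\<rparr>"
  have grpU: "group U" unfolding U_def by (rule R.units_group)
  have abU: "{a, b} \<subseteq> carrier U" using aU bU by (simp add: U_def units_of_carrier)
  have subG: "subgroup G U" unfolding G_def by (rule group.generate_is_subgroup[OF grpU abU])
  have grpH: "group H" unfolding H_def by (rule subgroup.subgroup_is_group[OF subG grpU])
  have abG: "{a, b} \<subseteq> G" unfolding G_def by (auto intro: generate.incl)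
  have carrH: "carrier H = G" by (simp add: H_def)
  have multH: "x \<otimes>\<^bsub>H\<^esub> y = x \<otimes>\<^bsub>L\<^esub> y" for x y by (simp add: H_def U_def units_of_def)
  have oneH: "\<one>\<^bsub>H\<^esub> = \<one>\<^bsub>L\<^esub>" by (simp add: H_def U_def units_of_def)
  have GU: "G \<subseteq> Units L" using subgroup.subset[OF subG] by (simp add: U_def units_of_carrier)
  have invH: "inv\<^bsub>H\<^esub> x = inv\<^bsub>L\<^esub> x" if "x \<in> G" for x
  proof -
    have "inv\<^bsub>H\<^esub> x = inv\<^bsub>U\<^esub> x" unfolding H_def by (rule group.m_inv_consistent[OF grpU subG that])
    also have "\<dots> = inv\<^bsub>L\<^esub> x" unfolding U_def by (rule R.units_of_inv) (use GU that in auto)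
    finally show ?thesis .
  qed
  let ?kw = "\<lambda>w. map (\<lambda>l. (fst l, snd l = a)) w"
  have wv: "set (map snd w) \<subseteq> {a, b} \<Longrightarrow> word_val H w = lpa_class s r (prodK f (?kw w))" for w
  proof (induction w)
    case Nil
    show ?case using cls_one[where 'k='k, of s r] by (simp add: word_val_def oneH L_def)
  next
    case (Cons l w)
    have lab: "snd l \<in> {a, b}" using Cons.prems by simp
    have lv: "letter_val H l = lpa_class s r (Pk (ckk (fst l, snd l = a)) (gkk f (fst l, snd l = a)))"
    proof (cases "fst l")
      case True
      then show ?thesis using lab ab by (auto simp: letter_val_def ckk_def gkk_def aP bP)
    next
      case False
      have aG: "a \<in> G" and bG: "b \<in> G" using abG by auto
      show ?thesis
      proof (cases "snd l = a")
        case True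
        then show ?thesis using False aG by (simp add: letter_val_def ckk_def gkk_def invH aI)
      next
        case F2: False
        then have sb: "snd l = b" using lab by auto
        show ?thesis using False F2 bG sb by (simp add: letter_val_def ckk_def gkk_def invH bI)
      qed
    qed
    have "word_val H (l # w) = letter_val H l \<otimes>\<^bsub>H\<^esub> word_val H w"
      by (simp add: word_val_def)
    also have "\<dots> = lpa_class s r (Pk (ckk (fst l, snd l = a)) (gkk f (fst l, snd l = a))) \<otimes>\<^bsub>L\<^esub> lpa_class s r (prodK f (?kw w))"
      using Cons.IH Cons.prems lv by (simp add: multH)
    also have "\<dots> = lpa_class s r (prodK f (?kw (l # w)))"
      unfolding L_def by (simp add: cls_mult[symmetric])
    finally show ?case .
  qed
  have free: "word_val H w \<noteq> \<one>\<^bsub>H\<^esub>"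
    if w: "w \<noteq> []" "set (map snd w) \<subseteq> {a, b}" "reduced_word w" for w
  proof -
    have red: "red_k (?kw w)"
      unfolding red_k_def
    proof (intro allI impI)
      fix i assume i: "Suc i < length (?kw w)"
      have i2: "Suc i < length w" using i by simp
      have m: "snd (w ! i) \<in> {a, b}" "snd (w ! Suc i) \<in> {a, b}"
        using w(2) i2 by (auto simp: subset_iff)
      have "\<not> (snd (w ! i) = snd (w ! Suc i) \<and> fst (w ! i) \<noteq> fst (w ! Suc i))"
        using w(3) i2 unfolding reduced_word_def by blast
      then show "\<not> (snd (?kw w ! i) = snd (?kw w ! Suc i) \<and> fst (?kw w ! i) \<noteq> fst (?kw w ! Suc i))"
        using m i2 ab by auto
    qed
    have "lpa_class s r (prodK f (?kw w)) \<noteq> (lpa_class s r (fa_mon []) :: (('v, 'e) lgen list \<Rightarrow> 'k) set)"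
      by (rule prodK_ne_one[OF path sr rp]) (use w(1) red in auto)
    then show ?thesis using wv[OF w(2)] cls_one[where 'k='k, of s r] by (simp add: oneH L_def)
  qed
  have fb: "free_basis H {a, b}"
    unfolding free_basis_def
  proof (intro conjI allI impI)
    show "{a, b} \<subseteq> carrier H" using abG carrH by simp
    show "generate H {a, b} = carrier H"
      unfolding H_def using group.generate_consistent[OF grpU abG subG] by (simp add: G_def)
  next
    fix w assume "w \<noteq> [] \<and> set (map snd w) \<subseteq> {a, b} \<and> reduced_word w"
    then show "word_val H w \<noteq> \<one>\<^bsub>H\<^esub>" using free by blast
  qed
  have fg: "free_group H" unfolding free_group_def using grpH fb by blast
  have nc: "\<not> cyclic_group H"
  proof
    assume "cyclic_group H"
    then obtain g where g: "g \<in> carrier H" "generate H {g} = carrier H"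
      unfolding cyclic_group_def by blast
    interpret HG: group H by (rule grpH)
    have aH: "a \<in> carrier H" and bH: "b \<in> carrier H" using abG carrH by auto
    have gp: "carrier H = {g [^]\<^bsub>H\<^esub> (k :: int) | k. k \<in> UNIV}"
      using HG.generate_pow[OF g(1)] g(2) by simp
    obtain i :: int where ai: "a = g [^]\<^bsub>H\<^esub> i" using aH unfolding gp by blast
    obtain j :: int where bj: "b = g [^]\<^bsub>H\<^esub> j" using bH unfolding gp by blast
    have comm: "a \<otimes>\<^bsub>H\<^esub> b = b \<otimes>\<^bsub>H\<^esub> a"
      unfolding ai bj using HG.int_pow_mult[OF g(1), of i j] HG.int_pow_mult[OF g(1), of j i]
      by (simp add: add.commute)
    let ?w4 = "[(True, a), (True, b), (False, a), (False, b)]"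
    have "word_val H ?w4 = a \<otimes>\<^bsub>H\<^esub> (b \<otimes>\<^bsub>H\<^esub> (inv\<^bsub>H\<^esub> a \<otimes>\<^bsub>H\<^esub> (inv\<^bsub>H\<^esub> b \<otimes>\<^bsub>H\<^esub> \<one>\<^bsub>H\<^esub>)))"
      by (simp add: word_val_def letter_val_def)
    also have "\<dots> = (a \<otimes>\<^bsub>H\<^esub> b) \<otimes>\<^bsub>H\<^esub> (inv\<^bsub>H\<^esub> a \<otimes>\<^bsub>H\<^esub> inv\<^bsub>H\<^esub> b)"
      using aH bH by (simp add: HG.m_assoc)
    also have "\<dots> = (b \<otimes>\<^bsub>H\<^esub> a) \<otimes>\<^bsub>H\<^esub> inv\<^bsub>H\<^esub> (b \<otimes>\<^bsub>H\<^esub> a)"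
      using aH bH by (simp add: comm HG.inv_mult_group)
    also have "\<dots> = \<one>\<^bsub>H\<^esub>" using aH bH by simp
    finally have "word_val H ?w4 = \<one>\<^bsub>H\<^esub>" .
    moreover have "reduced_word ?w4"
      unfolding reduced_word_def using ab
      by (auto simp: less_Suc_eq nth_Cons split: nat.splits)
    ultimately show False using free[of ?w4] by auto
  qed
  show ?thesis using aU bU fg nc unfolding H_def G_def U_def by simp
qed


end
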